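(* Fix $\alpha>1$ and $K>1$. For $n\ge2$ let $\mathcal{M}=\mathcal{M}(\alpha,K)$ be the seeded intervals defined below, and let $N_n$ be the number of distinct integer triples $(s,v,e)$ with $(s,e]\in\mathcal{M}$ and $s<v<e$. Then $N_n=\mathcal{O}(n\log n)$, i.e. there is a constant $C$ depending only on $\alpha$ and $K$ such that $N_n\le Cn\log n$ for all $n\ge2$.
   Context: Seeded intervals $\mathcal{M}(\alpha,K)$ for sample size $n$: let $l_1=1$, $l_{j+1}=\max\{l_j+1,\lfloor\alpha l_j\rfloor\}$ for $j\ge1$, $H=\max\{j:l_j\le n/2\}$, $s_l=\max\{1,\lfloor l/K\rfloor\}$, $\mathcal{I}_l=\{(n-2l,n]\}\cup\{(is_l,\,is_l+2l]: i=0,1,\dots,\lfloor(n-2l)/s_l\rfloor\}$, and $\mathcal{M}(\alpha,K)=\bigcup_{j=1}^{H}\mathcal{I}_{l_j}$, where $(a,b]$ denotes the integer interval $\{a+1,\dots,b\}$. *)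

theory Defs
  imports Complex_Main
begin

text \<open>Lengths l_1, l_2, ... ; here seed_l alpha j is l_(j+1) (0-indexed).\<close>
fun seed_l :: "real \<Rightarrow> nat \<Rightarrow> nat" where
  "seed_l \<alpha> 0 = 1"
| "seed_l \<alpha> (Suc j) = max (Suc (seed_l \<alpha> j)) (nat \<lfloor>\<alpha> * real (seed_l \<alpha> j)\<rfloor>)"

text \<open>H - 1 in 0-indexed form: the largest index j with l_(j+1) <= n/2.\<close>
definition seed_H :: "real \<Rightarrow> nat \<Rightarrow> nat" where
  "seed_H \<alpha> n = (GREATEST j. real (seed_l \<alpha> j) \<le> real n / 2)"

definition seed_shift :: "real \<Rightarrow> nat \<Rightarrow> nat" where
  "seed_shift K l = max 1 (nat \<lfloor>real l / K\<rfloor>)"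

text \<open>Intervals (a,b] are represented by the pair (a,b).\<close>
definition seed_I :: "real \<Rightarrow> nat \<Rightarrow> nat \<Rightarrow> (nat \<times> nat) set" where
  "seed_I K n l = {(n - 2*l, n)} \<union>
     {(i * seed_shift K l, i * seed_shift K l + 2*l) | i. i \<le> (n - 2*l) div seed_shift K l}"

definition seeded_intervals :: "real \<Rightarrow> real \<Rightarrow> nat \<Rightarrow> (nat \<times> nat) set" where
  "seeded_intervals \<alpha> K n = (\<Union>j\<in>{0..seed_H \<alpha> n}. seed_I K n (seed_l \<alpha> j))"

definition seed_triples :: "real \<Rightarrow> real \<Rightarrow> nat \<Rightarrow> nat" where
  "seed_triples \<alpha> K n = card {(s, v, e). (s, e) \<in> seeded_intervals \<alpha> K n \<and> s < v \<and> v < e}"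

end

theory Submission
  imports Defs
begin

lemma l_ge: "seed_l a j \<ge> j + 1"
  by (induction j) auto

lemma l_step: "seed_l a j \<le> seed_l a (Suc j)"
  by auto

lemma l_mono: "i \<le> j \<Longrightarrow> seed_l a i \<le> seed_l a j"
  using lift_Suc_mono_le[of "seed_l a", OF l_step] by blast

lemma l_growth:
  assumes a: "a > 1"
  defines "\<beta> \<equiv> (1 + a) / 2"
  defines "M \<equiv> nat \<lceil>2 / (a - 1)\<rceil>"
  shows "\<beta> ^ j \<le> \<beta> ^ M * real (seed_l a j)"
proof (induction j)
  case 0
  have "1 \<le> \<beta> ^ M" using a by (simp add: \<beta>_def)
  then show ?case by simp
next
  case (Suc j)
  have b1: "\<beta> \<ge> 1" using a by (simp add: \<beta>_def)
  show ?case
  proof (cases "Suc j \<le> M")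
    case True
    have "\<beta> ^ Suc j \<le> \<beta> ^ M" by (rule power_increasing[OF True b1])
    also have "\<dots> \<le> \<beta> ^ M * real (seed_l a (Suc j))"
      using l_ge[of "Suc j" a] b1 by simp
    finally show ?thesis .
  next
    case False
    let ?l = "real (seed_l a j)"
    have "real (seed_l a j) \<ge> real j + 1" using l_ge[of j a] by simp
    moreover have "real j \<ge> real M" using False by simp
    moreover have "real M \<ge> 2 / (a - 1)" unfolding M_def by linarith
    ultimately have lbig: "?l \<ge> 2 / (a - 1)" by linarith
    hence "?l * (a - 1) \<ge> 2" using a by (simp add: field_simps)
    hence k: "a * ?l - 1 \<ge> \<beta> * ?l" unfolding \<beta>_def by (simp add: field_simps)
    have "real (nat \<lfloor>a * ?l\<rfloor>) \<ge> a * ?l - 1" by linarith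
    moreover have "real (seed_l a (Suc j)) \<ge> real (nat \<lfloor>a * ?l\<rfloor>)" by simp
    ultimately have g: "real (seed_l a (Suc j)) \<ge> \<beta> * ?l" using k by linarith
    have "\<beta> ^ Suc j = \<beta> * \<beta> ^ j" by simp
    also have "\<dots> \<le> \<beta> * (\<beta> ^ M * ?l)" using Suc.IH b1 by (simp add: mult_left_mono)
    also have "\<dots> = \<beta> ^ M * (\<beta> * ?l)" by simp
    also have "\<dots> \<le> \<beta> ^ M * real (seed_l a (Suc j))"
      using g b1 by (simp add: mult_left_mono)
    finally show ?thesis .
  qed
qed

lemma H_prop:
  assumes "n \<ge> 2"
  shows "real (seed_l a (seed_H a n)) \<le> real n / 2"
proof -
  have p0: "real (seed_l a 0) \<le> real n / 2" using assms by simp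
  have bd: "y \<le> n" if "real (seed_l a y) \<le> real n / 2" for y
  proof -
    have "real y + 1 \<le> real (seed_l a y)" using l_ge[of y a] by linarith
    then show ?thesis using that by linarith
  qed
  show ?thesis unfolding seed_H_def
    by (rule GreatestI_nat[where P="\<lambda>j. real (seed_l a j) \<le> real n / 2", OF p0 bd])
qed

lemma seed_I_eq: "seed_I K n l = insert (n - 2*l, n)
   ((\<lambda>i. (i * seed_shift K l, i * seed_shift K l + 2*l)) ` {..(n - 2*l) div seed_shift K l})"
  unfolding seed_I_def by auto

lemma card_seed_I: "card (seed_I K n l) \<le> Suc (Suc ((n - 2*l) div seed_shift K l))"
proof -
  let ?A = "(\<lambda>i. (i * seed_shift K l, i * seed_shift K l + 2*l)) ` {..(n - 2*l) div seed_shift K l}"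
  have c: "card ?A \<le> Suc ((n - 2*l) div seed_shift K l)"
    using card_image_le[of "{..(n - 2*l) div seed_shift K l}"] by simp
  have f: "finite ?A" by simp
  have "card (insert (n - 2*l, n) ?A) \<le> Suc (card ?A)" using f by (simp add: card_insert_if)
  then show ?thesis unfolding seed_I_eq using c by linarith
qed

lemma seed_I_len: "p \<in> seed_I K n l \<Longrightarrow> snd p - fst p \<le> 2 * l"
  unfolding seed_I_def by auto

definition TT :: "nat \<times> nat \<Rightarrow> (nat \<times> nat \<times> nat) set" where
  "TT p = (\<lambda>v. (fst p, v, snd p)) ` {fst p<..<snd p}"

lemma card_TT: "card (TT p) \<le> snd p - fst p"
proof -
  have "card (TT p) \<le> card {fst p<..<snd p}" unfolding TT_def by (rule card_image_le) simp
  then show ?thesis by simp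
qed

lemma count_bound:
  "seed_triples a K n \<le> (\<Sum>j\<in>{0..seed_H a n}. 2 * seed_l a j *
      Suc (Suc ((n - 2 * seed_l a j) div seed_shift K (seed_l a j))))"
proof -
  let ?H = "seed_H a n"
  let ?U = "\<Union>j\<in>{0..?H}. \<Union>p\<in>seed_I K n (seed_l a j). TT p"
  have fin_I: "finite (seed_I K n l)" for l unfolding seed_I_eq by simp
  have finTT: "finite (TT p)" for p unfolding TT_def by simp
  have sub: "{(s, v, e). (s, e) \<in> seeded_intervals a K n \<and> s < v \<and> v < e} \<subseteq> ?U"
  proof
    fix x assume "x \<in> {(s, v, e). (s, e) \<in> seeded_intervals a K n \<and> s < v \<and> v < e}"
    then obtain s v e where x: "x = (s, v, e)" and se: "(s, e) \<in> seeded_intervals a K n"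
      and sv: "s < v" and ve: "v < e" by blast
    from se obtain j where j: "j \<in> {0..?H}" and sj: "(s, e) \<in> seed_I K n (seed_l a j)"
      unfolding seeded_intervals_def by blast
    have "x \<in> TT (s, e)" unfolding TT_def x using sv ve by (intro image_eqI[where x=v]) auto
    then show "x \<in> ?U" using j sj by blast
  qed
  have finU: "finite ?U" by (intro finite_UN_I finite_atLeastAtMost fin_I finTT)
  have "seed_triples a K n \<le> card ?U" unfolding seed_triples_def using card_mono[OF finU sub] .
  also have "\<dots> \<le> (\<Sum>j\<in>{0..?H}. card (\<Union>p\<in>seed_I K n (seed_l a j). TT p))"
    by (rule card_UN_le) simp
  also have "\<dots> \<le> (\<Sum>j\<in>{0..?H}. 2 * seed_l a j *
      Suc (Suc ((n - 2 * seed_l a j) div seed_shift K (seed_l a j))))"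
  proof (rule sum_mono)
    fix j
    let ?l = "seed_l a j"
    have "card (\<Union>p\<in>seed_I K n ?l. TT p) \<le> (\<Sum>p\<in>seed_I K n ?l. card (TT p))"
      by (rule card_UN_le) (rule fin_I)
    also have "\<dots> \<le> (\<Sum>p\<in>seed_I K n ?l. 2 * ?l)"
      by (rule sum_mono) (meson card_TT seed_I_len le_trans)
    also have "\<dots> = card (seed_I K n ?l) * (2 * ?l)" by simp
    also have "\<dots> \<le> Suc (Suc ((n - 2 * ?l) div seed_shift K ?l)) * (2 * ?l)"
      using card_seed_I by (rule mult_right_mono) simp
    finally show "card (\<Union>p\<in>seed_I K n ?l. TT p) \<le> 2 * ?l * Suc (Suc ((n - 2 * ?l) div seed_shift K ?l))"
      by (simp add: mult.commute)
  qed
  finally show ?thesis .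
qed

lemma shift_bound:
  assumes "K > 1"
  shows "real l \<le> 2 * K * real (seed_shift K l)"
proof (cases "real l < 2 * K")
  case True
  have "real (seed_shift K l) \<ge> 1" unfolding seed_shift_def by simp
  hence "2 * K * 1 \<le> 2 * K * real (seed_shift K l)" using assms by (intro mult_left_mono) auto
  then show ?thesis using True by linarith
next
  case False
  have "real l / K \<ge> 2" using False assms by (simp add: field_simps)
  hence "real (nat \<lfloor>real l / K\<rfloor>) \<ge> real l / K - 1" by linarith
  moreover have "real l / K - 1 \<ge> real l / (2 * K)" using \<open>real l / K \<ge> 2\<close> assms
    by (simp add: field_simps)
  moreover have "real (seed_shift K l) \<ge> real (nat \<lfloor>real l / K\<rfloor>)" unfolding seed_shift_def by simp
  ultimately have "real (seed_shift K l) \<ge> real l / (2 * K)" by linarith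
  then show ?thesis using assms by (simp add: field_simps)
qed

lemma term_bound:
  assumes K: "K > 1" and ln: "2 * l \<le> n"
  shows "real (2 * l * Suc (Suc ((n - 2 * l) div seed_shift K l))) \<le> (2 + 4 * K) * real n"
proof -
  let ?s = "seed_shift K l"
  let ?q = "(n - 2 * l) div ?s"
  have "?q * ?s \<le> n" by (meson div_times_less_eq_dividend diff_le_self le_trans)
  hence qs: "real ?q * real ?s \<le> real n" by (metis of_nat_le_iff of_nat_mult)
  have "real (2 * l * Suc (Suc ?q)) = 4 * real l + 2 * real l * real ?q" by (simp add: algebra_simps)
  also have "2 * real l * real ?q \<le> 2 * (2 * K * real ?s) * real ?q"
    using shift_bound[OF K, of l] by (simp add: mult_right_mono)
  also have "\<dots> = 4 * K * (real ?q * real ?s)" by simp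
  also have "\<dots> \<le> 4 * K * real n" using qs K by simp
  finally show ?thesis using ln by (simp add: algebra_simps)
qed

theorem lemma9:
  fixes \<alpha> K :: real
  assumes "\<alpha> > 1" and "K > 1"
  shows "\<exists>C. \<forall>n::nat. n \<ge> 2 \<longrightarrow> real (seed_triples \<alpha> K n) \<le> C * real n * ln (real n)"
proof -
  define \<beta> where "\<beta> = (1 + \<alpha>) / 2"
  define M where "M = nat \<lceil>2 / (\<alpha> - 1)\<rceil>"
  have b1: "\<beta> > 1" using assms by (simp add: \<beta>_def)
  define C0 where "C0 = (real M + 1) / ln 2 + 1 / ln \<beta>"
  have "\<forall>n::nat. n \<ge> 2 \<longrightarrow> real (seed_triples \<alpha> K n) \<le> (C0 * (2 + 4 * K)) * real n * ln (real n)"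
  proof (intro allI impI)
    fix n :: nat assume n2: "n \<ge> 2"
    let ?H = "seed_H \<alpha> n"
    have hp: "real (seed_l \<alpha> ?H) \<le> real n / 2" using H_prop[OF n2] .
    have lnn: "ln (real n) \<ge> ln 2" using n2 by simp
    have ln2: "ln (2::real) > 0" by simp
    have bM: "\<beta> ^ M > 0" using b1 by simp
    have "\<beta> ^ ?H \<le> \<beta> ^ M * real (seed_l \<alpha> ?H)"
      using l_growth[OF assms(1), of ?H] unfolding \<beta>_def M_def .
    also have "\<dots> \<le> \<beta> ^ M * real n"
      using hp bM by (intro mult_left_mono) auto
    finally have pw: "\<beta> ^ ?H \<le> \<beta> ^ M * real n" .
    have pos: "0 < \<beta> ^ ?H" using b1 by simp
    have "ln (\<beta> ^ ?H) \<le> ln (\<beta> ^ M * real n)"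
      by (rule ln_mono[OF pw pos])
    moreover have "ln (\<beta> ^ ?H) = real ?H * ln \<beta>" using b1 by (simp add: ln_realpow)
    moreover have "ln (\<beta> ^ M * real n) = real M * ln \<beta> + ln (real n)"
      using b1 n2 by (simp add: ln_mult ln_realpow)
    ultimately have "real ?H * ln \<beta> \<le> real M * ln \<beta> + ln (real n)" by simp
    hence "real ?H \<le> real M + ln (real n) / ln \<beta>" using b1 by (simp add: field_simps)
    moreover have "real M + 1 \<le> (real M + 1) / ln 2 * ln (real n)"
    proof -
      have "(real M + 1) / ln 2 * ln 2 \<le> (real M + 1) / ln 2 * ln (real n)"
        using lnn ln2 by (intro mult_left_mono) auto
      moreover have "(real M + 1) / ln 2 * ln 2 = real M + 1" using ln2 by simp
      ultimately show ?thesis by linarith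
    qed
    ultimately have Hb: "real ?H + 1 \<le> C0 * ln (real n)"
      unfolding C0_def by (simp add: algebra_simps)
    have "real (seed_triples \<alpha> K n) \<le> real (\<Sum>j\<in>{0..?H}. 2 * seed_l \<alpha> j *
      Suc (Suc ((n - 2 * seed_l \<alpha> j) div seed_shift K (seed_l \<alpha> j))))"
      using count_bound by (metis of_nat_le_iff)
    also have "\<dots> = (\<Sum>j\<in>{0..?H}. real (2 * seed_l \<alpha> j *
      Suc (Suc ((n - 2 * seed_l \<alpha> j) div seed_shift K (seed_l \<alpha> j)))))" by (rule of_nat_sum)
    also have "\<dots> \<le> (\<Sum>j\<in>{0..?H}. (2 + 4 * K) * real n)"
    proof (rule sum_mono)
      fix j assume "j \<in> {0..?H}"
      hence "seed_l \<alpha> j \<le> seed_l \<alpha> ?H" by (simp add: l_mono)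
      hence "2 * seed_l \<alpha> j \<le> n" using hp by linarith
      then show "real (2 * seed_l \<alpha> j * Suc (Suc ((n - 2 * seed_l \<alpha> j) div seed_shift K (seed_l \<alpha> j))))
          \<le> (2 + 4 * K) * real n" by (rule term_bound[OF assms(2)])
    qed
    also have "\<dots> = (real ?H + 1) * ((2 + 4 * K) * real n)" by simp
    also have "\<dots> \<le> (C0 * ln (real n)) * ((2 + 4 * K) * real n)"
      using Hb assms(2) by (intro mult_right_mono) auto
    finally show "real (seed_triples \<alpha> K n) \<le> (C0 * (2 + 4 * K)) * real n * ln (real n)"
      by (simp add: algebra_simps)
  qed
  then show ?thesis by blast
qed

end
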